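(* Let $\lambda_1,\lambda_2\ge0$ with $\lambda_1+\lambda_2(p-1)>0$, and let $w_i=\lambda_1+\lambda_2(p-i)$ for $i=1,\dots,p$ (the OSCAR weights). Let $\mathbf A\in\mathbb R^{n\times p}$ have columns with $\mathbf 1^T\mathbf a_k=0$ and $\|\mathbf a_k\|_2=1$ for all $k$, let $\rho_{ij}=\mathbf a_i^T\mathbf a_j$, and let $\mathbf y\in\mathbb R^n$. Let $\widehat{\mathbf x}$ be any minimizer of $\frac12\|\mathbf A\mathbf x-\mathbf y\|_2^2+\sum_{i=1}^p w_i|x|_{[i]}$ over $\mathbf x\in\mathbb R^p$. Then for every pair $(i,j)$ with $\|\mathbf y\|_2\sqrt{2-2\rho_{ij}\operatorname{sign}(\widehat x_i\widehat x_j)}<\lambda_2$, we have $|\widehat x_i|=|\widehat x_j|$.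
   Context: $|x|_{[i]}$ denotes the $i$-th largest component of $\mathbf x$ in magnitude; $\mathbf a_k$ is the $k$-th column of $\mathbf A$; $\mathbf 1$ is the all-ones vector; $\operatorname{sign}$ denotes the sign function. *)

theory Defs
  imports Complex_Main
begin

text \<open>Vectors in R^p are functions nat => real, only indices k < p matter.
  Matrices in R^(n x p) are functions nat => nat => real, entry (r,k) with r < n, k < p.\<close>

definition sorted_abs :: "nat \<Rightarrow> (nat \<Rightarrow> real) \<Rightarrow> nat \<Rightarrow> real" where
  "sorted_abs p x i = rev (sort (map (\<lambda>k. \<bar>x k\<bar>) [0..<p])) ! (i - 1)"

definition oscar_weight :: "real \<Rightarrow> real \<Rightarrow> nat \<Rightarrow> nat \<Rightarrow> real" where
  "oscar_weight l1 l2 p i = l1 + l2 * (real p - real i)"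

definition oscar_obj ::
  "nat \<Rightarrow> nat \<Rightarrow> (nat \<Rightarrow> nat \<Rightarrow> real) \<Rightarrow> (nat \<Rightarrow> real) \<Rightarrow> real \<Rightarrow> real \<Rightarrow> (nat \<Rightarrow> real) \<Rightarrow> real" where
  "oscar_obj n p A y l1 l2 x =
     1/2 * (\<Sum>r<n. ((\<Sum>k<p. A r k * x k) - y r)^2)
     + (\<Sum>i=1..p. oscar_weight l1 l2 p i * sorted_abs p x i)"

end

theory Submission imports Defs "HOL-Library.Multiset" "HOL-Analysis.Analysis" begin

fun Q :: "real list \<Rightarrow> real" where
 "Q [] = 0" | "Q (a#xs) = sum_list (map (max a) xs) + Q xs"

lemma Q_mset: "2 * Q xs + sum_list xs = (\<Sum>a\<in>#mset xs. \<Sum>b\<in>#mset xs. max a b)"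
proof (induction xs)
  case Nil then show ?case by simp
next
  case (Cons a xs)
  have e1: "sum_list (map (max a) xs) = (\<Sum>b\<in>#mset xs. max a b)"
    by (simp add: sum_mset_sum_list[symmetric])
  have e2: "(\<Sum>a'\<in>#mset xs. max a' a) = (\<Sum>b\<in>#mset xs. max a b)"
    by (simp add: max.commute)
  have "(\<Sum>a'\<in>#mset (a#xs). \<Sum>b\<in>#mset (a#xs). max a' b)
     = max a a + (\<Sum>b\<in>#mset xs. max a b) + (\<Sum>a'\<in>#mset xs. max a' a + (\<Sum>b\<in>#mset xs. max a' b))"
    by simp
  also have "\<dots> = a + 2 * (\<Sum>b\<in>#mset xs. max a b) + (\<Sum>a'\<in>#mset xs. \<Sum>b\<in>#mset xs. max a' b)"
    by (simp add: sum_mset.distrib e2)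
  finally show ?case using Cons e1 by simp
qed

lemma Q_perm: "mset xs = mset ys \<Longrightarrow> Q xs = Q ys"
proof -
  assume h: "mset xs = mset ys"
  have "sum_list xs = sum_list ys" using h by (metis sum_mset_sum_list)
  with Q_mset[of xs] Q_mset[of ys] h show ?thesis by simp
qed

definition W :: "real \<Rightarrow> real \<Rightarrow> real list \<Rightarrow> real" where
 "W l1 l2 s = (\<Sum>k<length s. (l1 + l2*(real (length s) - 1 - real k)) * s!k)"

lemma W_sorted: "sorted_wrt (\<ge>) s \<Longrightarrow> W l1 l2 s = l1 * sum_list s + l2 * Q s"
proof (induction s)
  case Nil then show ?case by (simp add: W_def)
next
  case (Cons a s)
  have ge: "\<forall>b\<in>set s. b \<le> a" using Cons.prems by simp
  have m: "map (max a) s = map (\<lambda>_. a) s" using ge by (auto simp: max_def)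
  have q: "sum_list (map (max a) s) = real (length s) * a" unfolding m by (simp add: sum_list_triv)
  have "W l1 l2 (a#s) = (l1 + l2 * real (length s)) * a + W l1 l2 s"
    unfolding W_def by (simp add: sum.lessThan_Suc_shift algebra_simps del: sum.lessThan_Suc)
  also have "\<dots> = l1 * sum_list (a#s) + l2 * Q (a#s)"
    using Cons q by (simp add: algebra_simps)
  finally show ?case .
qed

lemma pen_eq:
  "(\<Sum>i=1..p. oscar_weight l1 l2 p i * sorted_abs p x i)
   = l1 * sum_list (map (\<lambda>k. \<bar>x k\<bar>) [0..<p]) + l2 * Q (map (\<lambda>k. \<bar>x k\<bar>) [0..<p])"
proof -
  define L where "L = map (\<lambda>k. \<bar>x k\<bar>) [0..<p]"
  define s where "s = rev (sort L)"
  have len: "length s = p" by (simp add: s_def L_def)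
  have ms: "mset s = mset L" by (simp add: s_def)
  have so: "sorted_wrt (\<ge>) s" by (simp add: s_def sorted_wrt_rev)
  have "{1..p} = Suc ` {..<p}" by (simp add: image_Suc_lessThan)
  then have "(\<Sum>i=1..p. oscar_weight l1 l2 p i * sorted_abs p x i)
     = (\<Sum>k<p. oscar_weight l1 l2 p (Suc k) * sorted_abs p x (Suc k))"
    by (simp add: sum.reindex)
  also have "\<dots> = W l1 l2 s"
    unfolding W_def len by (simp add: oscar_weight_def sorted_abs_def s_def L_def algebra_simps)
  also have "\<dots> = l1 * sum_list s + l2 * Q s" using so by (rule W_sorted)
  also have "\<dots> = l1 * sum_list L + l2 * Q L"
    using ms Q_perm by (metis sum_mset_sum_list)
  finally show ?thesis by (simp add: L_def)
qed


lemma Q_nonneg: "(\<And>z. z \<in> set xs \<Longrightarrow> 0 \<le> z) \<Longrightarrow> 0 \<le> Q xs"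
proof (induction xs)
  case Nil then show ?case by simp
next
  case (Cons a xs)
  have "0 \<le> sum_list (map (max a) xs)"
    by (rule sum_list_nonneg) (use Cons.prems in \<open>auto simp: max_def\<close>)
  with Cons show ?case by simp
qed

lemma Q_zero: "Q (map (\<lambda>_. 0) xs) = 0"
  by (induction xs) (simp_all add: sum_list_triv)

definition pen where "pen p l1 l2 x = (\<Sum>i=1..p. oscar_weight l1 l2 p i * sorted_abs p x i)"

lemma pen_nonneg: "l1 \<ge> 0 \<Longrightarrow> l2 \<ge> 0 \<Longrightarrow> pen p l1 l2 x \<ge> 0"
  unfolding pen_def pen_eq
  by (intro add_nonneg_nonneg mult_nonneg_nonneg sum_list_nonneg Q_nonneg) auto

lemma pen_zero: "pen p l1 l2 (\<lambda>_. 0) = 0"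
  unfolding pen_def pen_eq by (simp add: Q_zero sum_list_triv)

lemma pen_split:
  assumes "i < p" "j < p" "i \<noteq> j"
  defines "R \<equiv> filter (\<lambda>k. k \<noteq> i \<and> k \<noteq> j) [0..<p]"
  shows "pen p l1 l2 x = l1 * (\<bar>x i\<bar> + \<bar>x j\<bar> + sum_list (map (\<lambda>k. \<bar>x k\<bar>) R))
     + l2 * (max \<bar>x i\<bar> \<bar>x j\<bar> + sum_list (map (\<lambda>c. max \<bar>x i\<bar> c + max \<bar>x j\<bar> c) (map (\<lambda>k. \<bar>x k\<bar>) R))
             + Q (map (\<lambda>k. \<bar>x k\<bar>) R))"
proof -
  have "mset [0..<p] = mset (i#j#R)"
    by (rule set_eq_iff_mset_eq_distinct[THEN iffD1]) (use assms in auto)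
  then have m: "mset (map (\<lambda>k. \<bar>x k\<bar>) [0..<p]) = mset (\<bar>x i\<bar> # \<bar>x j\<bar> # map (\<lambda>k. \<bar>x k\<bar>) R)"
    by (metis list.simps(9) mset_map)
  have s: "sum_list (map (\<lambda>k. \<bar>x k\<bar>) [0..<p]) = sum_list (\<bar>x i\<bar> # \<bar>x j\<bar> # map (\<lambda>k. \<bar>x k\<bar>) R)"
    using m by (metis sum_mset_sum_list)
  show ?thesis
    unfolding pen_def pen_eq s Q_perm[OF m]
    by (simp add: sum_list_addf algebra_simps o_def)
qed


lemma loss_shift:
  fixes A :: "nat \<Rightarrow> nat \<Rightarrow> real"
  assumes "i < p" "j < p" "i \<noteq> j"
  shows "(\<Sum>k<p. A r k * (xh(i := xh i + u, j := xh j + v)) k) = (\<Sum>k<p. A r k * xh k) + (u * A r i + v * A r j)"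
proof -
  have "\<And>k. A r k * (xh(i := xh i + u, j := xh j + v)) k
     = A r k * xh k + ((if k = i then u * A r i else 0) + (if k = j then v * A r j else 0))"
    using assms(3) by (auto simp: algebra_simps)
  then have "(\<Sum>k<p. A r k * (xh(i := xh i + u, j := xh j + v)) k)
     = (\<Sum>k<p. A r k * xh k) + ((\<Sum>k<p. if k = i then u * A r i else 0) + (\<Sum>k<p. if k = j then v * A r j else 0))"
    by (simp add: sum.distrib)
  also have "\<dots> = (\<Sum>k<p. A r k * xh k) + (u * A r i + v * A r j)"
    using assms by simp
  finally show ?thesis .
qed

lemma main_aux:
  fixes n p :: nat and A :: "nat \<Rightarrow> nat \<Rightarrow> real" and y xh :: "nat \<Rightarrow> real"
    and l1 l2 :: real
  assumes l1: "l1 \<ge> 0" and l2: "l2 \<ge> 0"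
    and nrm: "\<And>k. k < p \<Longrightarrow> sqrt (\<Sum>r<n. (A r k)^2) = 1"
    and opt: "\<And>x. oscar_obj n p A y l1 l2 xh \<le> oscar_obj n p A y l1 l2 x"
    and ip: "i < p" and jp: "j < p"
    and cond: "sqrt (\<Sum>r<n. (y r)^2) * sqrt (2 - 2 * (\<Sum>r<n. A r i * A r j) * sgn (xh i * xh j)) < l2"
    and gt: "\<bar>xh j\<bar> < \<bar>xh i\<bar>"
  shows False
proof -
  have ij: "i \<noteq> j" using gt by auto
  define a where "a = \<bar>xh i\<bar>"
  define b where "b = \<bar>xh j\<bar>"
  define si where "si = sgn (xh i)"
  define sj where "sj = sgn (xh j)"
  define \<rho> where "\<rho> = (\<Sum>r<n. A r i * A r j)"
  define Y where "Y = sqrt (\<Sum>r<n. (y r)^2)"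
  define D2 where "D2 = 2 - 2 * \<rho> * sgn (xh i * xh j)"
  define e where "e r = (\<Sum>k<p. A r k * xh k) - y r" for r
  define d where "d r = - si * A r i + sj * A r j" for r
  define E where "E = (\<Sum>r<n. (d r)^2)"
  have ab: "b < a" "0 \<le> b" using gt by (auto simp: a_def b_def)
  have loss_def: "oscar_obj n p A y l1 l2 x = 1/2 * (\<Sum>r<n. ((\<Sum>k<p. A r k * x k) - y r)^2) + pen p l1 l2 x" for x
    by (simp add: oscar_obj_def pen_def)
  have "oscar_obj n p A y l1 l2 xh \<le> oscar_obj n p A y l1 l2 (\<lambda>_. 0)" by (rule opt)
  then have "1/2 * (\<Sum>r<n. (e r)^2) + pen p l1 l2 xh \<le> 1/2 * (\<Sum>r<n. (y r)^2)"
    by (simp add: loss_def pen_zero e_def)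
  moreover have "pen p l1 l2 xh \<ge> 0" using pen_nonneg l1 l2 by blast
  ultimately have ee: "(\<Sum>r<n. (e r)^2) \<le> (\<Sum>r<n. (y r)^2)" by linarith
  have sqe: "sqrt (\<Sum>r<n. (e r)^2) \<le> Y" unfolding Y_def using ee by simp
  have ai: "(\<Sum>r<n. (A r i)^2) = 1" using nrm[OF ip] by simp
  have aj: "(\<Sum>r<n. (A r j)^2) = 1" using nrm[OF jp] by simp
  have si2: "si^2 = 1" using ab by (auto simp: si_def a_def sgn_if)
  have sj2: "sj^2 \<le> 1" by (auto simp: sj_def sgn_if)
  have sisj: "si * sj = sgn (xh i * xh j)" by (simp add: si_def sj_def sgn_mult)
  have "E = si^2 * (\<Sum>r<n. (A r i)^2) + sj^2 * (\<Sum>r<n. (A r j)^2) - 2 * (si * sj) * \<rho>"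
    unfolding E_def d_def \<rho>_def
    by (simp add: power2_eq_square algebra_simps sum.distrib sum_distrib_left sum_subtractf)
  then have E_eq: "E = 1 + sj^2 - 2 * sgn (xh i * xh j) * \<rho>" using ai aj si2 sisj by simp
  have E0: "0 \<le> E" unfolding E_def by (simp add: sum_nonneg)
  have ED: "E \<le> D2" using E_eq sj2 by (simp add: D2_def algebra_simps)
  have cs: "(\<Sum>r<n. e r * d r)^2 \<le> (\<Sum>r<n. (e r)^2) * E"
    unfolding E_def by (rule Cauchy_Schwarz_ineq_sum)
  have "\<bar>\<Sum>r<n. e r * d r\<bar> = sqrt ((\<Sum>r<n. e r * d r)^2)" by simp
  also have "\<dots> \<le> sqrt ((\<Sum>r<n. (e r)^2) * E)" using cs by (rule real_sqrt_le_mono)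
  also have "\<dots> = sqrt (\<Sum>r<n. (e r)^2) * sqrt E" by (simp add: real_sqrt_mult)
  also have "\<dots> \<le> Y * sqrt D2"
    by (intro mult_mono sqe real_sqrt_le_mono ED) (auto simp: Y_def E0 sum_nonneg)
  finally have ed: "(\<Sum>r<n. e r * d r) \<le> Y * sqrt D2" by linarith
  have YD: "Y * sqrt D2 < l2" using cond by (simp add: Y_def D2_def \<rho>_def)
  have D2nn: "0 \<le> D2" using E0 ED by linarith
  define t where "t = min ((a - b)/4) ((l2 - Y * sqrt D2)/(D2 + 1))"
  have t0: "0 < t" using ab YD D2nn by (simp add: t_def)
  have tab: "t \<le> (a - b)/4" unfolding t_def by (rule min.cobounded1)
  have tD: "t * D2 < l2 - Y * sqrt D2"
  proof -
    have "t \<le> (l2 - Y * sqrt D2)/(D2 + 1)" unfolding t_def by (rule min.cobounded2)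
    then have "t * (D2 + 1) \<le> l2 - Y * sqrt D2" using D2nn by (simp add: pos_le_divide_eq)
    then show ?thesis using t0 by (simp add: algebra_simps)
  qed
  define x' where "x' = xh(i := xh i + (- t * si), j := xh j + t * sj)"
  have res: "(\<Sum>k<p. A r k * x' k) - y r = e r + t * d r" for r
    unfolding x'_def using loss_shift[OF ip jp ij, of A r xh "- t * si" "t * sj"]
    by (simp add: e_def d_def algebra_simps)
  have "(\<Sum>r<n. ((\<Sum>k<p. A r k * x' k) - y r)^2)
      = (\<Sum>r<n. (e r)^2) + 2 * t * (\<Sum>r<n. e r * d r) + t^2 * E"
    unfolding res E_def
    by (simp add: power2_eq_square algebra_simps sum.distrib sum_distrib_left)
  note lossx' = this
  define R where "R = filter (\<lambda>k. k \<noteq> i \<and> k \<noteq> j) [0..<p]"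
  define a' where "a' = \<bar>x' i\<bar>"
  define b' where "b' = \<bar>x' j\<bar>"
  have a'v: "a' = a - t" using ab t0 tab ij
    by (auto simp: a'_def x'_def a_def si_def sgn_if abs_if)
  have b'v: "b \<le> b'" "b' \<le> b + t" using t0 ij
    by (auto simp: b'_def x'_def b_def sj_def sgn_if abs_if)
  have Rsame: "map (\<lambda>k. \<bar>x' k\<bar>) R = map (\<lambda>k. \<bar>xh k\<bar>) R"
    by (auto simp: R_def x'_def)
  have ps1: "pen p l1 l2 xh = l1 * (a + b + sum_list (map (\<lambda>k. \<bar>xh k\<bar>) R))
     + l2 * (max a b + sum_list (map (\<lambda>c. max a c + max b c) (map (\<lambda>k. \<bar>xh k\<bar>) R))
             + Q (map (\<lambda>k. \<bar>xh k\<bar>) R))"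
    unfolding a_def b_def R_def by (rule pen_split[OF ip jp ij])
  have ps2: "pen p l1 l2 x' = l1 * (a' + b' + sum_list (map (\<lambda>k. \<bar>xh k\<bar>) R))
     + l2 * (max a' b' + sum_list (map (\<lambda>c. max a' c + max b' c) (map (\<lambda>k. \<bar>xh k\<bar>) R))
             + Q (map (\<lambda>k. \<bar>xh k\<bar>) R))"
    using pen_split[OF ip jp ij, of l1 l2 x'] Rsame unfolding a'_def b'_def R_def by simp
  have termwise: "sum_list (map (\<lambda>c. max a' c + max b' c) L) \<le> sum_list (map (\<lambda>c. max a c + max b c) L)" for L
    by (rule sum_list_mono) (use a'v b'v tab t0 in \<open>auto simp: max_def\<close>)
  have mx: "max a b = a" "max a' b' = a'" using ab a'v b'v tab t0 by auto
  have "l1 * (a' + b') \<le> l1 * (a + b)" using l1 a'v b'v by (intro mult_left_mono) auto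
  moreover have "l2 * (max a' b' + sum_list (map (\<lambda>c. max a' c + max b' c) (map (\<lambda>k. \<bar>xh k\<bar>) R)) + t)
      \<le> l2 * (max a b + sum_list (map (\<lambda>c. max a c + max b c) (map (\<lambda>k. \<bar>xh k\<bar>) R)))"
    apply (intro mult_left_mono)
    using termwise[of "map (\<lambda>k. \<bar>xh k\<bar>) R"] mx a'v l2 by linarith+
  ultimately have pdec: "pen p l1 l2 x' + l2 * t \<le> pen p l1 l2 xh"
    unfolding ps1 ps2 by (simp add: algebra_simps)
  have "oscar_obj n p A y l1 l2 xh \<le> oscar_obj n p A y l1 l2 x'" by (rule opt)
  then have "1/2 * (\<Sum>r<n. (e r)^2) + pen p l1 l2 xh
      \<le> 1/2 * ((\<Sum>r<n. (e r)^2) + 2 * t * (\<Sum>r<n. e r * d r) + t^2 * E) + pen p l1 l2 x'"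
    by (simp add: loss_def lossx' e_def)
  moreover have "1/2 * ((\<Sum>r<n. (e r)^2) + 2 * t * (\<Sum>r<n. e r * d r) + t^2 * E)
      = 1/2 * (\<Sum>r<n. (e r)^2) + t * (\<Sum>r<n. e r * d r) + t^2 * E / 2" by (simp add: algebra_simps)
  ultimately have "l2 * t \<le> t * (\<Sum>r<n. e r * d r) + t^2 * E / 2" using pdec by linarith
  moreover have "t * (\<Sum>r<n. e r * d r) \<le> t * (Y * sqrt D2)"
    using ed t0 by (intro mult_left_mono) auto
  moreover have "t^2 * E \<le> t^2 * D2"
    using ED by (intro mult_left_mono) auto
  ultimately have "l2 * t \<le> t * (Y * sqrt D2) + t^2 * D2 / 2" by linarith
  moreover have "t * (Y * sqrt D2) + t^2 * D2 / 2 = t * (Y * sqrt D2 + t * D2 / 2)"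
    by (simp add: power2_eq_square algebra_simps)
  ultimately have "t * l2 \<le> t * (Y * sqrt D2 + t * D2 / 2)" by (simp only: mult.commute[of l2 t])
  then have "l2 \<le> Y * sqrt D2 + t * D2 / 2" using t0 by (rule mult_left_le_imp_le)
  moreover have "0 \<le> t * D2" using t0 D2nn by simp
  then have "t * D2 / 2 < l2 - Y * sqrt D2" using tD by linarith
  ultimately show False by linarith
qed


theorem corollary2:
  fixes n p :: nat and A :: "nat \<Rightarrow> nat \<Rightarrow> real" and y xh :: "nat \<Rightarrow> real"
    and l1 l2 :: real
  assumes "l1 \<ge> 0" and "l2 \<ge> 0" and "l1 + l2 * (real p - 1) > 0"
    and "\<And>k. k < p \<Longrightarrow> (\<Sum>r<n. A r k) = 0"
    and "\<And>k. k < p \<Longrightarrow> sqrt (\<Sum>r<n. (A r k)^2) = 1"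
    and "\<And>x. oscar_obj n p A y l1 l2 xh \<le> oscar_obj n p A y l1 l2 x"
    and "i < p" and "j < p"
    and "sqrt (\<Sum>r<n. (y r)^2) * sqrt (2 - 2 * (\<Sum>r<n. A r i * A r j) * sgn (xh i * xh j)) < l2"
  shows "\<bar>xh i\<bar> = \<bar>xh j\<bar>"
proof (rule ccontr)
  assume ne: "\<bar>xh i\<bar> \<noteq> \<bar>xh j\<bar>"
  show False
  proof (cases "\<bar>xh j\<bar> < \<bar>xh i\<bar>")
    case True
    show False by (rule main_aux[OF assms(1,2,5,6,7,8,9) True])
  next
    case False
    with ne have lt: "\<bar>xh i\<bar> < \<bar>xh j\<bar>" by linarith
    have c: "sqrt (\<Sum>r<n. (y r)^2) * sqrt (2 - 2 * (\<Sum>r<n. A r j * A r i) * sgn (xh j * xh i)) < l2"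
      using assms(9) by (simp add: mult.commute)
    show False by (rule main_aux[OF assms(1,2,5,6,8,7) c lt])
  qed
qed

end
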